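(* Let $\mathcal{M}=(W,R,V)$ be a Kripke model, let $\Gamma=(\mathrm{card}(W))^+$ be the successor cardinal of the cardinality of $W$, let $w\in W$ and let $\varphi$ be a sentence of the modal $\mu$-calculus. Then $\mathcal{M},w\vDash\varphi$ (standard semantics) if and only if $\mathcal{M},w\Vdash^\Gamma\varphi$, i.e. Eloise has a winning strategy in the $\Gamma$-bounded evaluation game $(\mathcal{M},w,\varphi,\Gamma)$.
   Context: Formulae: $\varphi ::= p \mid \neg p \mid X \mid \varphi\vee\varphi \mid \varphi\wedge\varphi \mid \Diamond\varphi \mid \Box\varphi \mid \mu X\varphi \mid \nu X\varphi$ ($p$ proposition symbols, $X$ label symbols). Standard semantics with assignments $s$ of subsets of $W$ to label symbols: atoms, $X$ (iff $w\in s(X)$), Boolean and modal connectives as usual; $\mathcal{M},w\vDash_s\mu X\psi$ (resp. $\nu X\psi$) iff $w$ belongs to the least (resp. greatest) fixed point of the monotone operator $A\mapsto\{v\in W\mid\mathcal{M},v\vDash_{s[A/X]}\psi\}$. For sentences truth is independent of $s$. $\mathcal{M},w\Vdash^\Gamma\varphi$ means Eloise has a winning strategy in the $\Gamma$-bounded evaluation game $(\mathcal{M},w,\varphi,\Gamma)$, defined as follows. Positions $(v,\theta,c)$ with $v\in W$, $\theta$ a subformula occurrence of $\varphi$, and $c$ a clock mapping from the occurrences of the form $\mu X\psi$ / $\nu X\psi$ in $\varphi$ to ordinals $\le\Gamma$; initially $(w,\varphi,c_0)$ with $c_0\equiv\Gamma$. At $p$ (resp. $\neg p$) Eloise wins iff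 $v\in V(p)$ (resp. $v\notin V(p)$), else Abelard; at $\vee$/$\Diamond$ Eloise chooses a disjunct / an $R$-successor (losing if there is none), at $\wedge$/$\Box$ Abelard chooses a conjunct / an $R$-successor (losing if there is none); at $\mu X\psi$ Eloise, at $\nu X\psi$ Abelard sets the clock of that occurrence to some $\gamma<\Gamma$ and play continues at $\psi$; at an atomic $X$ whose nearest binder $\mathrm{rf}(X)\in\{\mu X\psi,\nu X\psi\}$ has clock value $\gamma$: if $\gamma=0$ the binder's owner (Eloise for $\mu$, Abelard for $\nu$) loses; otherwise the owner chooses $\gamma'<\gamma$, the binder's clock becomes $\gamma'$, the clocks of all $\mu/\nu$-occurrences inside $\psi$ are reset to $\Gamma$, others unchanged, and play continues at $(v,\psi,\cdot)$. A winning strategy for Eloise is a function of positions prescribing her moves so that she wins every play following it. *)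

theory Defs
  imports Main "HOL-Library.Sublist"
begin

datatype ('p, 'x) fm =
    Prop 'p | NProp 'p | Var 'x
  | Or "('p, 'x) fm" "('p, 'x) fm" | And "('p, 'x) fm" "('p, 'x) fm"
  | Dia "('p, 'x) fm" | Box "('p, 'x) fm"
  | Mu 'x "('p, 'x) fm" | Nu 'x "('p, 'x) fm"

fun fv :: "('p, 'x) fm \<Rightarrow> 'x set" where
  "fv (Prop a) = {}"
| "fv (NProp a) = {}"
| "fv (Var x) = {x}"
| "fv (Or f g) = fv f \<union> fv g"
| "fv (And f g) = fv f \<union> fv g"
| "fv (Dia f) = fv f"
| "fv (Box f) = fv f"
| "fv (Mu x f) = fv f - {x}"
| "fv (Nu x f) = fv f - {x}"

definition sentence :: "('p, 'x) fm \<Rightarrow> bool" where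
  "sentence f \<longleftrightarrow> fv f = {}"

section \<open>Standard semantics; Kripke model: worlds = UNIV :: 'w, R, V\<close>

fun sat :: "('w \<Rightarrow> 'w \<Rightarrow> bool) \<Rightarrow> ('p \<Rightarrow> 'w set) \<Rightarrow> ('x \<Rightarrow> 'w set)
            \<Rightarrow> ('p, 'x) fm \<Rightarrow> 'w set" where
  "sat R V s (Prop a) = V a"
| "sat R V s (NProp a) = - V a"
| "sat R V s (Var x) = s x"
| "sat R V s (Or f g) = sat R V s f \<union> sat R V s g"
| "sat R V s (And f g) = sat R V s f \<inter> sat R V s g"
| "sat R V s (Dia f) = {v. \<exists>u. R v u \<and> u \<in> sat R V s f}"
| "sat R V s (Box f) = {v. \<forall>u. R v u \<longrightarrow> u \<in> sat R V s f}"
| "sat R V s (Mu x f) = lfp (\<lambda>A. sat R V (s(x := A)) f)"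
| "sat R V s (Nu x f) = gfp (\<lambda>A. sat R V (s(x := A)) f)"

fun sub :: "('p, 'x) fm \<Rightarrow> nat list \<Rightarrow> ('p, 'x) fm option" where
  "sub f [] = Some f"
| "sub (Or f g) (0 # p) = sub f p"
| "sub (Or f g) (Suc 0 # p) = sub g p"
| "sub (And f g) (0 # p) = sub f p"
| "sub (And f g) (Suc 0 # p) = sub g p"
| "sub (Dia f) (0 # p) = sub f p"
| "sub (Box f) (0 # p) = sub f p"
| "sub (Mu x f) (0 # p) = sub f p"
| "sub (Nu x f) (0 # p) = sub f p"
| "sub _ _ = None"

definition binder_of :: "('p, 'x) fm \<Rightarrow> nat list \<Rightarrow> 'x \<Rightarrow> bool" where
  "binder_of \<phi> q x \<longleftrightarrow> (\<exists>g. sub \<phi> q = Some (Mu x g) \<or> sub \<phi> q = Some (Nu x g))"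

definition nearest_binder :: "('p, 'x) fm \<Rightarrow> nat list \<Rightarrow> 'x \<Rightarrow> nat list \<Rightarrow> bool" where
  "nearest_binder \<phi> p x q \<longleftrightarrow> strict_prefix q p \<and> binder_of \<phi> q x \<and>
     (\<forall>q'. strict_prefix q q' \<and> strict_prefix q' p \<longrightarrow> \<not> binder_of \<phi> q' x)"

text \<open>Ordinals below Gamma are the elements of Field r for a well-order r (pairs (a,b) mean a \<le> b);
  a clock value is "'o option", where None stands for Gamma itself and Some a for a < Gamma.\<close>

fun olt :: "'o rel \<Rightarrow> 'o option \<Rightarrow> 'o option \<Rightarrow> bool" where
  "olt r (Some a) (Some b) \<longleftrightarrow> (a, b) \<in> r \<and> a \<noteq> b"
| "olt r (Some a) None \<longleftrightarrow> True"
| "olt r None _ \<longleftrightarrow> False"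

type_synonym ('w, 'o) position = "'w \<times> nat list \<times> (nat list \<Rightarrow> 'o option)"

definition init_pos :: "'w \<Rightarrow> ('w, 'o) position" where
  "init_pos w = (w, [], \<lambda>_. None)"

definition regen :: "nat list \<Rightarrow> 'o option \<Rightarrow> (nat list \<Rightarrow> 'o option) \<Rightarrow> (nat list \<Rightarrow> 'o option)" where
  "regen q g c = (\<lambda>q'. if q' = q then g else if prefix (q @ [0]) q' then None else c q')"

definition eloise_turn :: "('p, 'x) fm \<Rightarrow> ('w, 'o) position \<Rightarrow> bool" where
  "eloise_turn \<phi> pos = (case pos of (v, p, c) \<Rightarrow>
     (case sub \<phi> p of
        Some (Or _ _) \<Rightarrow> True
      | Some (Dia _) \<Rightarrow> True
      | Some (Mu _ _) \<Rightarrow> True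
      | Some (Var x) \<Rightarrow> (\<exists>q g. nearest_binder \<phi> p x q \<and> sub \<phi> q = Some (Mu x g))
      | _ \<Rightarrow> False))"

definition abelard_turn :: "('p, 'x) fm \<Rightarrow> ('w, 'o) position \<Rightarrow> bool" where
  "abelard_turn \<phi> pos = (case pos of (v, p, c) \<Rightarrow>
     (case sub \<phi> p of
        Some (And _ _) \<Rightarrow> True
      | Some (Box _) \<Rightarrow> True
      | Some (Nu _ _) \<Rightarrow> True
      | Some (Var x) \<Rightarrow> (\<exists>q g. nearest_binder \<phi> p x q \<and> sub \<phi> q = Some (Nu x g))
      | _ \<Rightarrow> False))"

text \<open>Legal moves (successor positions) from a non-terminal position.  At a variable whose
  binder clock is 0 there is no smaller ordinal, so the owner has no move and loses.\<close>
definition moves :: "('w \<Rightarrow> 'w \<Rightarrow> bool) \<Rightarrow> 'o rel \<Rightarrow> ('p, 'x) fm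
                     \<Rightarrow> ('w, 'o) position \<Rightarrow> ('w, 'o) position set" where
  "moves R r \<phi> pos = (case pos of (v, p, c) \<Rightarrow>
     (case sub \<phi> p of
        Some (Or _ _) \<Rightarrow> {(v, p @ [0], c), (v, p @ [1], c)}
      | Some (And _ _) \<Rightarrow> {(v, p @ [0], c), (v, p @ [1], c)}
      | Some (Dia _) \<Rightarrow> {(u, p @ [0], c) | u. R v u}
      | Some (Box _) \<Rightarrow> {(u, p @ [0], c) | u. R v u}
      | Some (Mu _ _) \<Rightarrow> {(v, p @ [0], c(p := Some g)) | g. g \<in> Field r}
      | Some (Nu _ _) \<Rightarrow> {(v, p @ [0], c(p := Some g)) | g. g \<in> Field r}
      | Some (Var x) \<Rightarrow> {(v, q @ [0], regen q (Some g) c) | q g.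
                            nearest_binder \<phi> p x q \<and> g \<in> Field r \<and> olt r (Some g) (c q)}
      | _ \<Rightarrow> {}))"

text \<open>Eloise's strategy sigma is a function of positions, giving the position she moves to.
  wins R V r phi sigma pos: every play from pos following sigma is won by Eloise
  (plays are finite: inductive definition).\<close>
inductive wins :: "('w \<Rightarrow> 'w \<Rightarrow> bool) \<Rightarrow> ('p \<Rightarrow> 'w set) \<Rightarrow> 'o rel \<Rightarrow> ('p, 'x) fm
                   \<Rightarrow> (('w, 'o) position \<Rightarrow> ('w, 'o) position) \<Rightarrow> ('w, 'o) position \<Rightarrow> bool"
  for R V r \<phi> \<sigma> where
  win_prop: "sub \<phi> p = Some (Prop a) \<Longrightarrow> v \<in> V a \<Longrightarrow> wins R V r \<phi> \<sigma> (v, p, c)"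
| win_nprop: "sub \<phi> p = Some (NProp a) \<Longrightarrow> v \<notin> V a \<Longrightarrow> wins R V r \<phi> \<sigma> (v, p, c)"
| win_eloise: "eloise_turn \<phi> pos \<Longrightarrow> \<sigma> pos \<in> moves R r \<phi> pos \<Longrightarrow> wins R V r \<phi> \<sigma> (\<sigma> pos)
               \<Longrightarrow> wins R V r \<phi> \<sigma> pos"
| win_abelard: "abelard_turn \<phi> pos \<Longrightarrow> (\<forall>pos' \<in> moves R r \<phi> pos. wins R V r \<phi> \<sigma> pos')
               \<Longrightarrow> wins R V r \<phi> \<sigma> pos"

definition game_forces :: "('w \<Rightarrow> 'w \<Rightarrow> bool) \<Rightarrow> ('p \<Rightarrow> 'w set) \<Rightarrow> 'o rel
                           \<Rightarrow> 'w \<Rightarrow> ('p, 'x) fm \<Rightarrow> bool" where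
  "game_forces R V r w \<phi> \<longleftrightarrow> (\<exists>\<sigma>. wins R V r \<phi> \<sigma> (init_pos w))"

end

theory Submission
  imports Defs
begin


definition muap :: "'o rel \<Rightarrow> ('w set \<Rightarrow> 'w set) \<Rightarrow> 'o \<Rightarrow> 'w set" where
  "muap r F = lfp (\<lambda>M a. \<Union>b\<in>{b. (b,a) \<in> r \<and> b \<noteq> a}. F (M b))"

lemma muap_eq:
  assumes "mono F"
  shows "muap r F a = (\<Union>b\<in>{b. (b,a) \<in> r \<and> b \<noteq> a}. F (muap r F b))"
proof -
  have m: "mono (\<lambda>M a. \<Union>b\<in>{b. (b,a) \<in> r \<and> b \<noteq> a}. F (M b))"
    apply (rule monoI) apply (rule le_funI)
    apply (rule UN_mono) using assms by (auto simp: mono_def le_fun_def)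
  show ?thesis unfolding muap_def
    by (subst lfp_unfold[OF m]) simp
qed

lemma wo_facts:
  assumes "Well_order r"
  shows "trans r" "antisym r" "wf (r - Id)"
    "\<And>a b. a \<in> Field r \<Longrightarrow> b \<in> Field r \<Longrightarrow> a \<noteq> b \<Longrightarrow> (a,b) \<in> r \<or> (b,a) \<in> r"
  using assms unfolding well_order_on_def linear_order_on_def partial_order_on_def
     preorder_on_def total_on_def by auto

lemma muap_mono:
  assumes "mono F" "Well_order r" "(b,a) \<in> r"
  shows "muap r F b \<subseteq> muap r F a"
proof -
  note w = wo_facts[OF assms(2)]
  have "{c. (c,b) \<in> r \<and> c \<noteq> b} \<subseteq> {c. (c,a) \<in> r \<and> c \<noteq> a}"
    using assms(3) w(1,2) unfolding trans_def antisym_def by blast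
  then show ?thesis
    apply (subst muap_eq[OF assms(1), of r b]) apply (subst muap_eq[OF assms(1), of r a])
    by (rule UN_mono) auto
qed

lemma muap_le_lfp:
  assumes "mono F" "Well_order r"
  shows "muap r F a \<subseteq> lfp F"
proof -
  note w = wo_facts[OF assms(2)]
  show ?thesis
  proof (induction a rule: wf_induct_rule[OF w(3)])
    case (1 a)
    have "F (muap r F b) \<subseteq> lfp F" if "b \<in> {b. (b,a) \<in> r \<and> b \<noteq> a}" for b
    proof -
      have "F (muap r F b) \<subseteq> F (lfp F)" using 1 that assms(1) by (auto dest: monoD)
      also have "\<dots> = lfp F" by (rule lfp_fixpoint[OF assms(1)])
      finally show ?thesis .
    qed
    then have "(\<Union>b\<in>{b. (b,a) \<in> r \<and> b \<noteq> a}. F (muap r F b)) \<subseteq> lfp F" by (rule UN_least)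
    then show ?case using muap_eq[OF assms(1), of r a] by simp
  qed
qed

lemma muap_le_F:
  assumes "mono F" "Well_order r"
  shows "muap r F a \<subseteq> F (muap r F a)"
proof -
  have "F (muap r F b) \<subseteq> F (muap r F a)" if "b \<in> {b. (b,a) \<in> r \<and> b \<noteq> a}" for b
    using monoD[OF assms(1) muap_mono[OF assms(1,2), of b a]] that by auto
  then have "(\<Union>b\<in>{b. (b,a) \<in> r \<and> b \<noteq> a}. F (muap r F b)) \<subseteq> F (muap r F a)" by (rule UN_least)
  then show ?thesis using muap_eq[OF assms(1), of r a] by simp
qed

lemma lfp_apx:
  assumes "mono F" "Well_order r" and card: "(card_of (Field r), card_of (UNIV :: 'w set)) \<notin> ordLeq"
  shows "lfp (F :: 'w set \<Rightarrow> 'w set) = (\<Union>g\<in>Field r. F (muap r F g))"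
proof (rule equalityI)
  note w = wo_facts[OF assms(2)]
  have "F (muap r F g) \<subseteq> lfp F" for g
  proof -
    have "F (muap r F g) \<subseteq> F (lfp F)" using muap_le_lfp[OF assms(1,2)] assms(1) by (auto dest: monoD)
    also have "\<dots> = lfp F" by (rule lfp_fixpoint[OF assms(1)])
    finally show ?thesis .
  qed
  then show "(\<Union>g\<in>Field r. F (muap r F g)) \<subseteq> lfp F" by (rule UN_least)
  have "\<exists>a \<in> Field r. F (muap r F a) \<subseteq> muap r F a"
  proof (rule ccontr)
    assume "\<not> ?thesis"
    then have ex: "\<forall>a \<in> Field r. \<exists>e. e \<in> F (muap r F a) \<and> e \<notin> muap r F a" by auto
    obtain f where f: "\<forall>a \<in> Field r. f a \<in> F (muap r F a) \<and> f a \<notin> muap r F a"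
      using bchoice[OF ex] by blast
    have lt: "F (muap r F a) \<subseteq> muap r F b" if "(a,b) \<in> r" "a \<noteq> b" for a b
    proof -
      have "F (muap r F a) \<subseteq> (\<Union>b'\<in>{b'. (b',b) \<in> r \<and> b' \<noteq> b}. F (muap r F b'))"
        using that by (intro UN_upper) simp
      then show ?thesis using muap_eq[OF assms(1), of r b] by simp
    qed
    have "inj_on f (Field r)"
    proof (rule inj_onI, rule ccontr)
      fix a b assume ab: "a \<in> Field r" "b \<in> Field r" "f a = f b" "a \<noteq> b"
      then consider "(a,b) \<in> r" | "(b,a) \<in> r" using w(4) by blast
      then show False
      proof cases
        case 1 then show ?thesis using lt[of a b] f ab by (metis subsetD)
      next
        case 2 then show ?thesis using lt[of b a] f ab by (metis subsetD)
      qed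
    qed
    then have "(card_of (Field r), card_of (UNIV :: 'w set)) \<in> ordLeq"
      using card_of_ordLeq[of "Field r" "UNIV :: 'w set"] by auto
    with card show False by contradiction
  qed
  then obtain a where a: "a \<in> Field r" "F (muap r F a) \<subseteq> muap r F a" by blast
  have "lfp F \<subseteq> muap r F a" using a(2) by (rule lfp_lowerbound)
  also have "\<dots> \<subseteq> F (muap r F a)"
    by (rule muap_le_F[OF assms(1,2)])
  also have "\<dots> \<subseteq> (\<Union>g\<in>Field r. F (muap r F g))" using a(1) by (rule UN_upper)
  finally show "lfp F \<subseteq> (\<Union>g\<in>Field r. F (muap r F g))" .
qed

definition nuap :: "'o rel \<Rightarrow> ('w set \<Rightarrow> 'w set) \<Rightarrow> 'o \<Rightarrow> 'w set" where
  "nuap r F a = - muap r (\<lambda>A. - F (- A)) a"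

lemma dual_mono: "mono (F :: 'a set \<Rightarrow> 'b set) \<Longrightarrow> mono (\<lambda>A. - F (- A))"
  unfolding mono_def by (meson Compl_anti_mono compl_le_compl_iff)

lemma nuap_eq:
  assumes "mono F"
  shows "nuap r F a = (\<Inter>b\<in>{b. (b,a) \<in> r \<and> b \<noteq> a}. F (nuap r F b))"
  unfolding nuap_def by (subst muap_eq[OF dual_mono[OF assms]]) auto

lemma gfp_dual:
  assumes "mono (F :: 'a set \<Rightarrow> 'a set)"
  shows "gfp F = - lfp (\<lambda>A. - F (- A))"
proof (rule antisym)
  have m: "mono (\<lambda>A. - F (- A))" by (rule dual_mono[OF assms])
  have "F (- lfp (\<lambda>A. - F (- A))) = - lfp (\<lambda>A. - F (- A))"
    using lfp_fixpoint[OF m] by (metis double_complement)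
  then show "- lfp (\<lambda>A. - F (- A)) \<le> gfp F" by (intro gfp_upperbound) simp
  have "- F (- (- gfp F)) = - gfp F" using gfp_fixpoint[OF assms] by simp
  then have "lfp (\<lambda>A. - F (- A)) \<le> - gfp F" by (intro lfp_lowerbound) simp
  then show "gfp F \<le> - lfp (\<lambda>A. - F (- A))" by auto
qed

lemma gfp_apx:
  assumes "mono F" "Well_order r" and card: "(card_of (Field r), card_of (UNIV :: 'w set)) \<notin> ordLeq"
  shows "gfp (F :: 'w set \<Rightarrow> 'w set) = (\<Inter>g\<in>Field r. F (nuap r F g))"
proof -
  have "gfp F = - (\<Union>g\<in>Field r. - F (- muap r (\<lambda>A. - F (- A)) g))"
    using gfp_dual[OF assms(1)] lfp_apx[OF dual_mono[OF assms(1)] assms(2) card] by simp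
  then show ?thesis unfolding nuap_def by simp
qed

definition apxMu :: "'o rel \<Rightarrow> ('w set \<Rightarrow> 'w set) \<Rightarrow> 'o option \<Rightarrow> 'w set" where
  "apxMu r F oo = (case oo of None \<Rightarrow> lfp F | Some a \<Rightarrow> muap r F a)"

definition apxNu :: "'o rel \<Rightarrow> ('w set \<Rightarrow> 'w set) \<Rightarrow> 'o option \<Rightarrow> 'w set" where
  "apxNu r F oo = (case oo of None \<Rightarrow> gfp F | Some a \<Rightarrow> nuap r F a)"

lemma apxMu_iff:
  assumes "mono F" "Well_order r" and card: "(card_of (Field r), card_of (UNIV :: 'w set)) \<notin> ordLeq"
  shows "(v::'w) \<in> apxMu r F oo \<longleftrightarrow> (\<exists>g\<in>Field r. olt r (Some g) oo \<and> v \<in> F (muap r F g))"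
proof (cases oo)
  case None then show ?thesis using lfp_apx[OF assms] by (simp add: apxMu_def)
next
  case (Some a) then show ?thesis using muap_eq[OF assms(1), of r a]
    by (auto simp: apxMu_def intro: FieldI1)
qed

lemma apxNu_iff:
  assumes "mono F" "Well_order r" and card: "(card_of (Field r), card_of (UNIV :: 'w set)) \<notin> ordLeq"
  shows "(v::'w) \<in> apxNu r F oo \<longleftrightarrow> (\<forall>g\<in>Field r. olt r (Some g) oo \<longrightarrow> v \<in> F (nuap r F g))"
proof (cases oo)
  case None then show ?thesis using gfp_apx[OF assms] by (simp add: apxNu_def)
next
  case (Some a) then show ?thesis using nuap_eq[OF assms(1), of r a]
    by (auto simp: apxNu_def intro: FieldI1)
qed



lemma sat_mono: "s \<le> s' \<Longrightarrow> sat R V s f \<subseteq> sat R V s' f"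
proof (induction f arbitrary: s s')
  case (Var x) then show ?case by (simp add: le_fun_def)
next
  case (Or f g) show ?case by (simp only: sat.simps) (rule Un_mono[OF Or.IH(1)[OF Or.prems] Or.IH(2)[OF Or.prems]])
next
  case (And f g) show ?case by (simp only: sat.simps) (rule Int_mono[OF And.IH(1)[OF And.prems] And.IH(2)[OF And.prems]])
next
  case (Dia f) show ?case using Dia.IH[OF Dia.prems] by auto
next
  case (Box f) show ?case using Box.IH[OF Box.prems] by auto
next
  case (Mu x f)
  have h: "s(x := A) \<le> s'(x := A)" for A using Mu.prems by (simp add: le_fun_def)
  show ?case by (simp only: sat.simps) (rule lfp_mono, rule Mu.IH, rule h)
next
  case (Nu x f)
  have h: "s(x := A) \<le> s'(x := A)" for A using Nu.prems by (simp add: le_fun_def)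
  show ?case by (simp only: sat.simps) (rule gfp_mono, rule Nu.IH, rule h)
qed simp_all

lemma sat_mono_upd: "mono (\<lambda>A. sat R V (s(x := A)) f)"
  by (rule monoI, rule sat_mono) (auto simp: le_fun_def)

fun ev :: "('w \<Rightarrow> 'w \<Rightarrow> bool) \<Rightarrow> ('p \<Rightarrow> 'w set) \<Rightarrow> 'o rel \<Rightarrow> ('p,'x) fm \<Rightarrow> nat list \<Rightarrow> nat list
   \<Rightarrow> (nat list \<Rightarrow> 'o option) \<Rightarrow> ('x \<Rightarrow> 'w set) \<Rightarrow> ('x \<Rightarrow> 'w set)" where
  "ev R V r f pre [] c s = s"
| "ev R V r (Or f g) pre (0#p) c s = ev R V r f (pre@[0]) p c s"
| "ev R V r (Or f g) pre (Suc 0#p) c s = ev R V r g (pre@[Suc 0]) p c s"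
| "ev R V r (And f g) pre (0#p) c s = ev R V r f (pre@[0]) p c s"
| "ev R V r (And f g) pre (Suc 0#p) c s = ev R V r g (pre@[Suc 0]) p c s"
| "ev R V r (Dia f) pre (0#p) c s = ev R V r f (pre@[0]) p c s"
| "ev R V r (Box f) pre (0#p) c s = ev R V r f (pre@[0]) p c s"
| "ev R V r (Mu x f) pre (0#p) c s = ev R V r f (pre@[0]) p c (s(x := apxMu r (\<lambda>A. sat R V (s(x:=A)) f) (c pre)))"
| "ev R V r (Nu x f) pre (0#p) c s = ev R V r f (pre@[0]) p c (s(x := apxNu r (\<lambda>A. sat R V (s(x:=A)) f) (c pre)))"
| "ev R V r _ _ _ c s = s"

lemma sub_append: "sub f (p @ p') = (case sub f p of None \<Rightarrow> None | Some g \<Rightarrow> sub g p')"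
  by (induction f p rule: sub.induct) auto

lemma ev_append: "sub f p = Some g \<Longrightarrow> ev R V r f pre (p @ p') c s = ev R V r g (pre @ p) p' c (ev R V r f pre p c s)"
  by (induction f p arbitrary: pre s rule: sub.induct) auto

lemma nat3: "(i::nat) = 0 \<or> i = Suc 0 \<or> (\<exists>n. i = Suc (Suc n))"
  by presburger

lemma ev_None: "sub f [i] = None \<Longrightarrow> ev R V r f pre (i#p) c s = s"
  using nat3[of i] by (cases f) auto

lemma ev_one_clock: "c pre = c' pre \<Longrightarrow> ev R V r f pre [i] c s = ev R V r f pre [i] c' s"
  using nat3[of i] by (cases f) auto

lemma ev_one_nob: "\<not> binder_of f [] x \<Longrightarrow> ev R V r f pre [i] c s x = s x"
  using nat3[of i] by (cases f) (auto simp: binder_of_def)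

lemma sub_Cons: "sub f [i] = Some g \<Longrightarrow> sub f (i # l) = sub g l"
  using sub_append[of f "[i]" l] by simp

lemma ev_cong_clock: "(\<forall>q. strict_prefix q p \<longrightarrow> c (pre @ q) = c' (pre @ q)) \<Longrightarrow> ev R V r f pre p c s = ev R V r f pre p c' s"
proof (induction p arbitrary: f pre s)
  case Nil then show ?case by simp
next
  case (Cons i p)
  show ?case
  proof (cases "sub f [i]")
    case None then show ?thesis by (simp add: ev_None)
  next
    case (Some g)
    have e: "ev R V r f pre (i # p) cc s = ev R V r g (pre @ [i]) p cc (ev R V r f pre [i] cc s)" for cc
      using ev_append[OF Some, of R V r pre p cc s] by simp
    have "c pre = c' pre" using Cons.prems by (metis append_Nil2 strict_prefix_simps(2))
    then have 1: "ev R V r f pre [i] c s = ev R V r f pre [i] c' s" by (rule ev_one_clock)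
    have h: "\<forall>q. strict_prefix q p \<longrightarrow> c ((pre @ [i]) @ q) = c' ((pre @ [i]) @ q)"
      using Cons.prems by (metis append_Cons append_assoc self_append_conv2 strict_prefix_simps(3))
    show ?thesis by (simp only: e 1 Cons.IH[OF h])
  qed
qed

lemma binder_of_Cons: "sub f [i] = Some g \<Longrightarrow> binder_of f (i # l) x = binder_of g l x"
  by (simp add: binder_of_def sub_Cons)

lemma ev_nobind: "(\<forall>q. strict_prefix q p \<longrightarrow> \<not> binder_of f q x) \<Longrightarrow> ev R V r f pre p c s x = s x"
proof (induction p arbitrary: f pre s)
  case Nil then show ?case by simp
next
  case (Cons i p)
  show ?case
  proof (cases "sub f [i]")
    case None then show ?thesis by (simp add: ev_None)
  next
    case (Some g)
    have e: "ev R V r f pre (i # p) c s = ev R V r g (pre @ [i]) p c (ev R V r f pre [i] c s)"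
      using ev_append[OF Some, of R V r pre p c s] by simp
    have "\<not> binder_of f [] x" using Cons.prems by (metis strict_prefix_simps(2))
    then have 1: "ev R V r f pre [i] c s x = s x" by (rule ev_one_nob)
    have h: "\<forall>q. strict_prefix q p \<longrightarrow> \<not> binder_of g q x"
      using Cons.prems binder_of_Cons[OF Some] by (metis strict_prefix_simps(3))
    show ?thesis by (simp only: e 1 Cons.IH[OF h])
  qed
qed


lemma sub_Cons_None: "sub f [i] = None \<Longrightarrow> sub f (i # p) = None"
  using sub_append[of f "[i]" p] by simp

lemma fv_child: "sub f [i] = Some g \<Longrightarrow> x \<in> fv g \<Longrightarrow> \<not> binder_of f [] x \<Longrightarrow> x \<in> fv f"
  using nat3[of i] by (cases f) (auto simp: binder_of_def)

lemma sp_Cons: "strict_prefix (i#q) q' \<Longrightarrow> \<exists>q''. q' = i#q''"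
  by (cases q') auto

lemma nb_Cons: "sub f [i] = Some g \<Longrightarrow> nearest_binder g p x q \<Longrightarrow> nearest_binder f (i#p) x (i#q)"
  unfolding nearest_binder_def
proof (intro conjI allI impI)
  assume s: "sub f [i] = Some g" and nb: "strict_prefix q p \<and> binder_of g q x \<and>
    (\<forall>q'. strict_prefix q q' \<and> strict_prefix q' p \<longrightarrow> \<not> binder_of g q' x)"
  from nb have nb1: "strict_prefix q p" by (rule conjunct1)
  from nb have nb2: "binder_of g q x" by (rule conjunct1[OF conjunct2])
  from nb have nb3: "\<forall>q'. strict_prefix q q' \<and> strict_prefix q' p \<longrightarrow> \<not> binder_of g q' x"
    by (rule conjunct2[OF conjunct2])
  show "strict_prefix (i # q) (i # p)" using nb1 by (simp only: strict_prefix_simps simp_thms)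
  show "binder_of f (i # q) x" using nb2 by (simp only: binder_of_Cons[OF s])
  fix q' assume q': "strict_prefix (i # q) q' \<and> strict_prefix q' (i # p)"
  from sp_Cons[OF conjunct1[OF q']] obtain q'' where q'': "q' = i # q''" ..
  have "strict_prefix q q''" "strict_prefix q'' p" using q' unfolding q''
    by (simp_all only: strict_prefix_simps simp_thms)
  then have "\<not> binder_of g q'' x" using nb3 by (simp only: simp_thms)
  then show "\<not> binder_of f q' x" unfolding q'' binder_of_Cons[OF s] .
qed

lemma var_binder: "sub f p = Some (Var x) \<Longrightarrow>
   (x \<in> fv f \<and> (\<forall>q. strict_prefix q p \<longrightarrow> \<not> binder_of f q x)) \<or> (\<exists>q. nearest_binder f p x q)"
proof (induction p arbitrary: f)
  case Nil then show ?case by (simp add: strict_prefix_def)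
next
  case (Cons i p)
  have "sub f [i] \<noteq> None" using Cons.prems sub_Cons_None by (metis option.distinct(1))
  then obtain g where s: "sub f [i] = Some g" by (cases "sub f [i]") simp_all
  then have sg: "sub g p = Some (Var x)" using Cons.prems sub_Cons by metis
  from Cons.IH[OF sg] show ?case
  proof (elim disjE conjE)
    assume "\<exists>q. nearest_binder g p x q"
    then obtain q where "nearest_binder g p x q" ..
    then have "nearest_binder f (i#p) x (i#q)" by (rule nb_Cons[OF s])
    then show ?thesis by (intro disjI2 exI)
  next
    assume a1: "x \<in> fv g" and a2: "\<forall>q. strict_prefix q p \<longrightarrow> \<not> binder_of g q x"
    have rest: "\<not> binder_of f q' x" if q': "strict_prefix q' (i # p)" "q' \<noteq> []" for q'
    proof -
      obtain j q'' where q'': "q' = j # q''" using \<open>q' \<noteq> []\<close> by (cases q') simp_all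
      have "j = i" "strict_prefix q'' p" using q'(1) unfolding q''
        by (simp_all only: strict_prefix_simps simp_thms)
      then have "\<not> binder_of g q'' x" using a2 by (simp only: simp_thms)
      then show ?thesis unfolding q'' \<open>j = i\<close> binder_of_Cons[OF s] .
    qed
    show ?thesis
    proof (cases "binder_of f [] x")
      case True
      have "nearest_binder f (i#p) x []"
        unfolding nearest_binder_def
      proof (intro conjI allI impI)
        show "strict_prefix [] (i # p)" by (simp only: strict_prefix_simps)
        show "binder_of f [] x" by (rule True)
        fix q' assume q': "strict_prefix [] q' \<and> strict_prefix q' (i # p)"
        have "q' \<noteq> []" using conjunct1[OF q'] by (cases q') simp_all
        then show "\<not> binder_of f q' x" using rest conjunct2[OF q'] by (simp only: simp_thms)
      qed
      then show ?thesis by (intro disjI2 exI)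
    next
      case False
      have "\<forall>q. strict_prefix q (i#p) \<longrightarrow> \<not> binder_of f q x"
      proof (intro allI impI)
        fix q assume q: "strict_prefix q (i#p)"
        show "\<not> binder_of f q x"
        proof (cases "q = []")
          case True then show ?thesis using False by (simp only: simp_thms)
        next
          case False then show ?thesis using rest q by (simp only: simp_thms)
        qed
      qed
      then show ?thesis using fv_child[OF s a1 False] by (intro disjI1 conjI)
    qed
  qed
qed

lemma nb_unique: "nearest_binder f p x q1 \<Longrightarrow> nearest_binder f p x q2 \<Longrightarrow> q1 = q2"
proof (rule ccontr)
  assume n1: "nearest_binder f p x q1" and n2: "nearest_binder f p x q2" and ne: "q1 \<noteq> q2"
  have p1: "prefix q1 p" "strict_prefix q1 p" "binder_of f q1 x"
    and c1: "\<forall>q'. strict_prefix q1 q' \<and> strict_prefix q' p \<longrightarrow> \<not> binder_of f q' x"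
    using n1 unfolding nearest_binder_def strict_prefix_def by simp_all
  have p2: "prefix q2 p" "strict_prefix q2 p" "binder_of f q2 x"
    and c2: "\<forall>q'. strict_prefix q2 q' \<and> strict_prefix q' p \<longrightarrow> \<not> binder_of f q' x"
    using n2 unfolding nearest_binder_def strict_prefix_def by simp_all
  from prefix_same_cases[OF p1(1) p2(1)] show False
  proof
    assume "prefix q1 q2"
    then have "strict_prefix q1 q2" using ne unfolding strict_prefix_def by simp
    then show False using c1[rule_format, OF conjI[OF _ p2(2)]] p2(3) by simp
  next
    assume "prefix q2 q1"
    then have "strict_prefix q2 q1" using ne unfolding strict_prefix_def by simp
    then show False using c2[rule_format, OF conjI[OF _ p1(2)]] p1(3) by simp
  qed
qed

lemma sub_size: "sub f p = Some g \<Longrightarrow> length p + size g \<le> size f"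
  by (induction f p rule: sub.induct) auto

lemma sp_decomp: "strict_prefix q p \<Longrightarrow> \<exists>i rest. p = q @ i # rest"
  unfolding strict_prefix_def prefix_def by (metis append_Nil2 neq_Nil_conv)

lemma ev_Mu0: "sub f q = Some (Mu x g) \<Longrightarrow> ev R V r f [] (q @ [0]) c s =
   (ev R V r f [] q c s)(x := apxMu r (\<lambda>A. sat R V ((ev R V r f [] q c s)(x := A)) g) (c q))"
  using ev_append[of f q "Mu x g" R V r "[]" "[0]" c s] by simp

lemma ev_Nu0: "sub f q = Some (Nu x g) \<Longrightarrow> ev R V r f [] (q @ [0]) c s =
   (ev R V r f [] q c s)(x := apxNu r (\<lambda>A. sat R V ((ev R V r f [] q c s)(x := A)) g) (c q))"
  using ev_append[of f q "Nu x g" R V r "[]" "[0]" c s] by simp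

lemma nearest_val:
  assumes nb: "nearest_binder f p x q" and sp: "sub f p \<noteq> None"
  shows "ev R V r f [] p c s x = ev R V r f [] (q @ [0]) c s x"
proof -
  from nb have sq: "strict_prefix q p" and bq: "binder_of f q x"
    and nob: "\<forall>q'. strict_prefix q q' \<and> strict_prefix q' p \<longrightarrow> \<not> binder_of f q' x"
    unfolding nearest_binder_def by simp_all
  from bq obtain g where g: "sub f q = Some (Mu x g) \<or> sub f q = Some (Nu x g)"
    unfolding binder_of_def by auto
  from sp_decomp[OF sq] obtain i rest where p: "p = q @ i # rest" by (elim exE)
  have "i = 0" using sp g nat3[of i] unfolding p sub_append by auto
  then have p0: "p = (q @ [0]) @ rest" using p by simp
  have sg: "sub f (q @ [0]) = Some g" using g unfolding sub_append by auto
  have e: "ev R V r f [] p c s = ev R V r g (q @ [0]) rest c (ev R V r f [] (q @ [0]) c s)"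
    unfolding p0 using ev_append[OF sg, of R V r "[]" rest c s] by simp
  have h: "\<forall>l. strict_prefix l rest \<longrightarrow> \<not> binder_of g l x"
  proof (intro allI impI)
    fix l assume l: "strict_prefix l rest"
    have "sub f ((q @ [0]) @ l) = sub g l" using sub_append[of f "q@[0]" l] sg by simp
    then have eq: "binder_of g l x = binder_of f ((q @ [0]) @ l) x"
      unfolding binder_of_def by simp
    have A: "strict_prefix q ((q @ [0]) @ l)" by (simp add: strict_prefix_def)
    have B: "strict_prefix ((q @ [0]) @ l) p" using l unfolding p0
      by (simp add: strict_prefix_def)
    show "\<not> binder_of g l x" unfolding eq using nob[rule_format, OF conjI[OF A B]] .
  qed
  show ?thesis by (simp only: e ev_nobind[OF h])
qed



definition T :: "('w \<Rightarrow> 'w \<Rightarrow> bool) \<Rightarrow> ('p \<Rightarrow> 'w set) \<Rightarrow> 'o rel \<Rightarrow> ('p,'x) fm \<Rightarrow> ('x \<Rightarrow> 'w set)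
   \<Rightarrow> ('w, 'o) position \<Rightarrow> bool" where
  "T R V r \<phi> s0 pos = (case pos of (v,p,c) \<Rightarrow>
     (case sub \<phi> p of None \<Rightarrow> False | Some \<theta> \<Rightarrow> v \<in> sat R V (ev R V r \<phi> [] p c s0) \<theta>))"

lemma regen_agree: "strict_prefix q' q \<Longrightarrow> regen q g c q' = c q'"
proof -
  assume a: "strict_prefix q' q"
  then have l: "length q' < length q" by (rule prefix_length_less)
  then have "q' \<noteq> q" by auto
  moreover have "\<not> prefix (q @ [0]) q'"
  proof
    assume "prefix (q @ [0]) q'"
    then have "length (q @ [0]) \<le> length q'" by (rule prefix_length_le)
    then show False using l by simp
  qed
  ultimately show ?thesis unfolding regen_def by simp
qed

lemma upd_agree: "strict_prefix q' q \<Longrightarrow> (c(q := g)) q' = c q'"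
proof -
  assume "strict_prefix q' q"
  then have "length q' < length q" by (rule prefix_length_less)
  then have "q' \<noteq> q" by auto
  then show ?thesis by simp
qed

lemma ev_clock_E: "(\<And>q'. strict_prefix q' q \<Longrightarrow> c' q' = c q') \<Longrightarrow> ev R V r \<phi> [] q c' s = ev R V r \<phi> [] q c s"
  by (rule ev_cong_clock) simp

lemma LE:
  fixes R :: "'w \<Rightarrow> 'w \<Rightarrow> bool"
  assumes WO: "Well_order r" and card: "(card_of (Field r), card_of (UNIV::'w set)) \<notin> ordLeq"
    and et: "eloise_turn \<phi> (v,p,c)"
  shows "T R V r \<phi> s0 (v,p,c) \<longleftrightarrow> (\<exists>pos' \<in> moves R r \<phi> (v,p,c). T R V r \<phi> s0 pos')"
proof -
  from et obtain \<theta> where th: "sub \<phi> p = Some \<theta>" by (auto simp: eloise_turn_def split: option.splits)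
  define E where "E = ev R V r \<phi> [] p c s0"
  have Ech: "ev R V r \<phi> [] (p @ [i]) c s0 = ev R V r \<theta> p [i] c E" for i
    using ev_append[OF th, of R V r "[]" "[i]" c s0] by (simp add: E_def)
  have sch: "sub \<phi> (p @ [i]) = sub \<theta> [i]" for i using sub_append[of \<phi> p "[i]"] th by simp
  have TP: "T R V r \<phi> s0 (v,p,c) \<longleftrightarrow> v \<in> sat R V E \<theta>" by (simp add: T_def th E_def)
  show ?thesis
  proof (cases \<theta>)
    case (Or f g)
    have "moves R r \<phi> (v,p,c) = {(v,p@[0],c),(v,p@[1],c)}" by (simp add: moves_def th Or)
    moreover have "T R V r \<phi> s0 (v,p@[0],c) \<longleftrightarrow> v \<in> sat R V E f" by (simp add: T_def sch Ech Or)
    moreover have "T R V r \<phi> s0 (v,p@[1],c) \<longleftrightarrow> v \<in> sat R V E g" by (simp add: T_def sch Ech Or)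
    ultimately show ?thesis using TP Or by auto
  next
    case (Dia f)
    have "moves R r \<phi> (v,p,c) = {(u,p@[0],c) | u. R v u}" by (simp add: moves_def th Dia)
    moreover have "T R V r \<phi> s0 (u,p@[0],c) \<longleftrightarrow> u \<in> sat R V E f" for u by (simp add: T_def sch Ech Dia)
    ultimately show ?thesis using TP Dia by auto
  next
    case (Mu x g)
    define F where "F = (\<lambda>A. sat R V (E(x := A)) g)"
    have mF: "mono F" unfolding F_def by (rule sat_mono_upd)
    have "moves R r \<phi> (v,p,c) = {(v,p@[0],c(p := Some a)) | a. a \<in> Field r}" by (simp add: moves_def th Mu)
    moreover have "T R V r \<phi> s0 (v,p@[0],c(p := Some a)) \<longleftrightarrow> v \<in> F (muap r F a)" for a
    proof -
      have e1: "ev R V r \<phi> [] p (c(p := Some a)) s0 = E"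
        unfolding E_def by (rule ev_clock_E) (rule upd_agree)
      show ?thesis using ev_Mu0[OF th[unfolded Mu], of R V r "c(p := Some a)" s0]
        by (simp add: T_def sch Mu e1 F_def apxMu_def)
    qed
    moreover have "v \<in> sat R V E \<theta> \<longleftrightarrow> v \<in> apxMu r F None" by (simp add: Mu apxMu_def F_def)
    ultimately show ?thesis using TP apxMu_iff[OF mF WO card] by auto
  next
    case (Var x)
    from et obtain q g0 where nb: "nearest_binder \<phi> p x q" and sq: "sub \<phi> q = Some (Mu x g0)"
      by (auto simp: eloise_turn_def th Var)
    define Eq where "Eq = ev R V r \<phi> [] q c s0"
    define F where "F = (\<lambda>A. sat R V (Eq(x := A)) g0)"
    have mF: "mono F" unfolding F_def by (rule sat_mono_upd)
    have sq0: "sub \<phi> (q @ [0]) = Some g0" using sub_append[of \<phi> q "[0]"] sq by simp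
    have "moves R r \<phi> (v,p,c) = {(v, q@[0], regen q (Some a) c) | a. a \<in> Field r \<and> olt r (Some a) (c q)}"
    proof -
      have "moves R r \<phi> (v,p,c) = {(v, q'@[0], regen q' (Some a) c) | q' a. nearest_binder \<phi> p x q' \<and> a \<in> Field r \<and> olt r (Some a) (c q')}"
        by (simp add: moves_def th Var)
      also have "\<dots> = {(v, q@[0], regen q (Some a) c) | a. a \<in> Field r \<and> olt r (Some a) (c q)}"
        using nb by (blast dest: nb_unique[OF nb])
      finally show ?thesis .
    qed
    moreover have "T R V r \<phi> s0 (v,q@[0],regen q (Some a) c) \<longleftrightarrow> v \<in> F (muap r F a)" for a
    proof -
      have e1: "ev R V r \<phi> [] q (regen q (Some a) c) s0 = Eq"
        unfolding Eq_def by (rule ev_clock_E) (rule regen_agree)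
      have rq: "regen q (Some a) c q = Some a" by (simp add: regen_def)
      show ?thesis using ev_Mu0[OF sq, of R V r "regen q (Some a) c" s0]
        by (simp add: T_def sq0 e1 rq F_def apxMu_def)
    qed
    moreover have "v \<in> sat R V E \<theta> \<longleftrightarrow> v \<in> apxMu r F (c q)"
    proof -
      have "sat R V E \<theta> = ev R V r \<phi> [] (q @ [0]) c s0 x" using nearest_val[OF nb] th
        by (simp add: Var E_def)
      also have "\<dots> = apxMu r F (c q)" using ev_Mu0[OF sq, of R V r c s0] by (simp add: F_def Eq_def)
      finally show ?thesis by simp
    qed
    ultimately show ?thesis using TP apxMu_iff[OF mF WO card] by auto
  qed (use et th in \<open>simp_all add: eloise_turn_def\<close>)
qed

lemma LA:
  fixes R :: "'w \<Rightarrow> 'w \<Rightarrow> bool"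
  assumes WO: "Well_order r" and card: "(card_of (Field r), card_of (UNIV::'w set)) \<notin> ordLeq"
    and et: "abelard_turn \<phi> (v,p,c)"
  shows "T R V r \<phi> s0 (v,p,c) \<longleftrightarrow> (\<forall>pos' \<in> moves R r \<phi> (v,p,c). T R V r \<phi> s0 pos')"
proof -
  from et obtain \<theta> where th: "sub \<phi> p = Some \<theta>" by (auto simp: abelard_turn_def split: option.splits)
  define E where "E = ev R V r \<phi> [] p c s0"
  have Ech: "ev R V r \<phi> [] (p @ [i]) c s0 = ev R V r \<theta> p [i] c E" for i
    using ev_append[OF th, of R V r "[]" "[i]" c s0] by (simp add: E_def)
  have sch: "sub \<phi> (p @ [i]) = sub \<theta> [i]" for i using sub_append[of \<phi> p "[i]"] th by simp
  have TP: "T R V r \<phi> s0 (v,p,c) \<longleftrightarrow> v \<in> sat R V E \<theta>" by (simp add: T_def th E_def)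
  show ?thesis
  proof (cases \<theta>)
    case (And f g)
    have "moves R r \<phi> (v,p,c) = {(v,p@[0],c),(v,p@[1],c)}" by (simp add: moves_def th And)
    moreover have "T R V r \<phi> s0 (v,p@[0],c) \<longleftrightarrow> v \<in> sat R V E f" by (simp add: T_def sch Ech And)
    moreover have "T R V r \<phi> s0 (v,p@[1],c) \<longleftrightarrow> v \<in> sat R V E g" by (simp add: T_def sch Ech And)
    ultimately show ?thesis using TP And by auto
  next
    case (Box f)
    have "moves R r \<phi> (v,p,c) = {(u,p@[0],c) | u. R v u}" by (simp add: moves_def th Box)
    moreover have "T R V r \<phi> s0 (u,p@[0],c) \<longleftrightarrow> u \<in> sat R V E f" for u by (simp add: T_def sch Ech Box)
    ultimately show ?thesis using TP Box by auto
  next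
    case (Nu x g)
    define F where "F = (\<lambda>A. sat R V (E(x := A)) g)"
    have mF: "mono F" unfolding F_def by (rule sat_mono_upd)
    have "moves R r \<phi> (v,p,c) = {(v,p@[0],c(p := Some a)) | a. a \<in> Field r}" by (simp add: moves_def th Nu)
    moreover have "T R V r \<phi> s0 (v,p@[0],c(p := Some a)) \<longleftrightarrow> v \<in> F (nuap r F a)" for a
    proof -
      have e1: "ev R V r \<phi> [] p (c(p := Some a)) s0 = E"
        unfolding E_def by (rule ev_clock_E) (rule upd_agree)
      show ?thesis using ev_Nu0[OF th[unfolded Nu], of R V r "c(p := Some a)" s0]
        by (simp add: T_def sch  Nu e1 F_def apxNu_def)
    qed
    moreover have "v \<in> sat R V E \<theta> \<longleftrightarrow> v \<in> apxNu r F None" by (simp add:  Nu apxNu_def F_def)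
    ultimately show ?thesis using TP apxNu_iff[OF mF WO card] by auto
  next
    case (Var x)
    from et obtain q g0 where nb: "nearest_binder \<phi> p x q" and sq: "sub \<phi> q = Some (Nu x g0)"
      by (auto simp: abelard_turn_def th Var)
    define Eq where "Eq = ev R V r \<phi> [] q c s0"
    define F where "F = (\<lambda>A. sat R V (Eq(x := A)) g0)"
    have mF: "mono F" unfolding F_def by (rule sat_mono_upd)
    have sq0: "sub \<phi> (q @ [0]) = Some g0" using sub_append[of \<phi> q "[0]"] sq by simp
    have "moves R r \<phi> (v,p,c) = {(v, q@[0], regen q (Some a) c) | a. a \<in> Field r \<and> olt r (Some a) (c q)}"
    proof -
      have "moves R r \<phi> (v,p,c) = {(v, q'@[0], regen q' (Some a) c) | q' a. nearest_binder \<phi> p x q' \<and> a \<in> Field r \<and> olt r (Some a) (c q')}"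
        by (simp add: moves_def th Var)
      also have "\<dots> = {(v, q@[0], regen q (Some a) c) | a. a \<in> Field r \<and> olt r (Some a) (c q)}"
        using nb by (blast dest: nb_unique[OF nb])
      finally show ?thesis .
    qed
    moreover have "T R V r \<phi> s0 (v,q@[0],regen q (Some a) c) \<longleftrightarrow> v \<in> F (nuap r F a)" for a
    proof -
      have e1: "ev R V r \<phi> [] q (regen q (Some a) c) s0 = Eq"
        unfolding Eq_def by (rule ev_clock_E) (rule regen_agree)
      have rq: "regen q (Some a) c q = Some a" by (simp add: regen_def)
      show ?thesis using ev_Nu0[OF sq, of R V r "regen q (Some a) c" s0]
        by (simp add: T_def sq0 e1 rq F_def apxNu_def)
    qed
    moreover have "v \<in> sat R V E \<theta> \<longleftrightarrow> v \<in> apxNu r F (c q)"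
    proof -
      have "sat R V E \<theta> = ev R V r \<phi> [] (q @ [0]) c s0 x" using nearest_val[OF nb] th
        by (simp add: Var E_def)
      also have "\<dots> = apxNu r F (c q)" using ev_Nu0[OF sq, of R V r c s0] by (simp add: F_def Eq_def)
      finally show ?thesis by simp
    qed
    ultimately show ?thesis using TP apxNu_iff[OF mF WO card] by auto
  qed (use et th in \<open>simp_all add: abelard_turn_def\<close>)
qed


lemma LP: "sub \<phi> p = Some (Prop a) \<Longrightarrow> T R V r \<phi> s0 (v,p,c) \<longleftrightarrow> v \<in> V a"
  by (simp add: T_def)

lemma LNP: "sub \<phi> p = Some (NProp a) \<Longrightarrow> T R V r \<phi> s0 (v,p,c) \<longleftrightarrow> v \<notin> V a"
  by (simp add: T_def)

lemma T_sub: "T R V r \<phi> s0 (v,p,c) \<Longrightarrow> \<exists>\<theta>. sub \<phi> p = Some \<theta>"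
  by (cases "sub \<phi> p") (simp_all add: T_def)

lemma LX:
  assumes sent: "sentence \<phi>" and th: "sub \<phi> p = Some \<theta>"
  shows "(\<exists>a. \<theta> = Prop a) \<or> (\<exists>a. \<theta> = NProp a) \<or> eloise_turn \<phi> (v,p,c) \<or> abelard_turn \<phi> (v,p,c)"
proof (cases \<theta>)
  case (Var x)
  from var_binder[OF th[unfolded Var]] sent have "\<exists>q. nearest_binder \<phi> p x q"
    unfolding sentence_def by blast
  then obtain q where nb: "nearest_binder \<phi> p x q" ..
  then have "binder_of \<phi> q x" unfolding nearest_binder_def by simp
  then obtain g where "sub \<phi> q = Some (Mu x g) \<or> sub \<phi> q = Some (Nu x g)" unfolding binder_of_def by blast
  then show ?thesis
  proof
    assume sq: "sub \<phi> q = Some (Mu x g)"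
    have "eloise_turn \<phi> (v,p,c)" unfolding eloise_turn_def using th Var nb sq by auto
    then show ?thesis by simp
  next
    assume sq: "sub \<phi> q = Some (Nu x g)"
    have "abelard_turn \<phi> (v,p,c)" unfolding abelard_turn_def using th Var nb sq by auto
    then show ?thesis by simp
  qed
qed (simp_all add: eloise_turn_def abelard_turn_def th)

lemma part1:
  fixes R :: "'w \<Rightarrow> 'w \<Rightarrow> bool"
  assumes WO: "Well_order r" and card: "(card_of (Field r), card_of (UNIV::'w set)) \<notin> ordLeq"
  shows "wins R V r \<phi> \<sigma> pos \<Longrightarrow> T R V r \<phi> s0 pos"
proof (induction rule: wins.induct)
  case (win_prop p a v c) then show ?case by (simp add: LP)
next
  case (win_nprop p a v c) then show ?case by (simp add: LNP)
next
  case (win_eloise pos)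
  obtain v p c where pos: "pos = (v,p,c)" by (cases pos)
  show ?case using LE[OF WO card win_eloise(1)[unfolded pos]] win_eloise(2,4) pos by auto
next
  case (win_abelard pos)
  obtain v p c where pos: "pos = (v,p,c)" by (cases pos)
  show ?case using LA[OF WO card win_abelard(1)[unfolded pos]] win_abelard(2) pos by auto
qed



definition isb :: "('p,'x) fm \<Rightarrow> nat list \<Rightarrow> bool" where
  "isb \<phi> l = (\<exists>x g. sub \<phi> l = Some (Mu x g) \<or> sub \<phi> l = Some (Nu x g))"

definition vec :: "('p,'x) fm \<Rightarrow> nat list \<Rightarrow> (nat list \<Rightarrow> 'o option) \<Rightarrow> 'o option list" where
  "vec \<phi> p c = map (\<lambda>d. if d < length p \<and> isb \<phi> (take d p) then c (take d p) else None) [0..<size \<phi>]"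

definition OL :: "'o rel \<Rightarrow> ('o option \<times> 'o option) set" where
  "OL r = {(a,b). olt r a b}"

definition WR :: "'o rel \<Rightarrow> ('p,'x) fm \<Rightarrow> (('w,'o) position \<times> ('w,'o) position) set" where
  "WR r \<phi> = inv_image (lex (OL r) <*lex*> less_than)
     (\<lambda>(v,p,c). (vec \<phi> p c, case sub \<phi> p of None \<Rightarrow> 0 | Some \<theta> \<Rightarrow> size \<theta>))"

lemma wf_OL:
  assumes WO: "Well_order r" shows "wf (OL r)"
proof -
  have w: "wf (r - Id)" using wo_facts[OF WO] by simp
  have "OL r \<subseteq> inv_image (less_than <*lex*> (r - Id)) (\<lambda>x. (if x = None then 1::nat else 0, the x))"
  proof
    fix z assume "z \<in> OL r"
    then obtain a b where z: "z = (a,b)" and o: "olt r a b" unfolding OL_def by auto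
    show "z \<in> inv_image (less_than <*lex*> (r - Id)) (\<lambda>x. (if x = None then 1::nat else 0, the x))"
      using o unfolding z by (cases a; cases b) auto
  qed
  then show ?thesis by (rule wf_subset[rotated]) (intro wf_inv_image wf_lex_prod wf_less_than w)
qed

lemma wf_WR: "Well_order r \<Longrightarrow> wf (WR r \<phi>)"
  unfolding WR_def by (intro wf_inv_image wf_lex_prod wf_lex wf_OL wf_less_than)

lemma lex_step:
  assumes eq: "\<And>d. d < k \<Longrightarrow> f d = g d" and kN: "k < N" and st: "(f k, g k) \<in> R"
  shows "(map f [0..<N], map g [0..<N]) \<in> lex R"
proof -
  have u: "[0..<N] = [0..<k] @ k # [Suc k..<N]"
    using upt_add_eq_append[of 0 k "N - k"] upt_conv_Cons[of k N] kN by simp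
  have "map f [0..<k] = map g [0..<k]" using eq by simp
  then show ?thesis unfolding u lex_conv using st
    by (auto intro!: exI[of _ "map g [0..<k]"])
qed

lemma vec_nonbinder:
  assumes "\<not> isb \<phi> p"
  shows "vec \<phi> (p @ [i]) c = vec \<phi> p c"
  unfolding vec_def
proof (rule map_cong[OF refl])
  fix d assume "d \<in> set [0..<size \<phi>]"
  show "(if d < length (p @ [i]) \<and> isb \<phi> (take d (p @ [i])) then c (take d (p @ [i])) else None) =
        (if d < length p \<and> isb \<phi> (take d p) then c (take d p) else None)"
  proof (cases "d < length p")
    case True then show ?thesis by simp
  next
    case False
    then show ?thesis using assms by (cases "d = length p") simp_all
  qed
qed

lemma dec:
  fixes R :: "'w \<Rightarrow> 'w \<Rightarrow> bool"
  assumes th: "sub \<phi> p = Some \<theta>" and mv: "pos' \<in> moves R r \<phi> (v,p,c)"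
  shows "(pos', (v,p,c)) \<in> WR r \<phi>"
proof -
  have sch: "sub \<phi> (p @ [i]) = sub \<theta> [i]" for i using sub_append[of \<phi> p "[i]"] th by simp
  have szp: "length p + size \<theta> \<le> size \<phi>" by (rule sub_size[OF th])
  have nonb: "(pos', (v,p,c)) \<in> WR r \<phi>"
    if nb: "\<not> isb \<phi> p" and pos': "pos' = (u, p @ [i], c)" and ch: "sub \<theta> [i] = Some g" and sz: "size g < size \<theta>" for u i g
    unfolding WR_def pos' using vec_nonbinder[OF nb, of i c] th sch[of i] ch sz by simp
  have binmove: "(pos', (v,p,c)) \<in> WR r \<phi>" if b: "isb \<phi> p" and pos': "pos' = (v, p @ [0], c(p := Some a))"
      and sz: "size \<theta> > 0" for a
  proof -
    have "(vec \<phi> (p @ [0]) (c(p := Some a)), vec \<phi> p c) \<in> lex (OL r)"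
      unfolding vec_def
    proof (rule lex_step[of "length p"])
      fix d assume d: "d < length p"
      then have "take d p \<noteq> p" by (metis length_take min.absorb4 order_less_irrefl)
      then show "(if d < length (p @ [0]) \<and> isb \<phi> (take d (p @ [0])) then (c(p := Some a)) (take d (p @ [0])) else None) =
         (if d < length p \<and> isb \<phi> (take d p) then c (take d p) else None)" using d by simp
    next
      show "length p < size \<phi>" using szp sz by simp
    next
      show "(if length p < length (p @ [0]) \<and> isb \<phi> (take (length p) (p @ [0])) then (c(p := Some a)) (take (length p) (p @ [0])) else None,
             if length p < length p \<and> isb \<phi> (take (length p) p) then c (take (length p) p) else None) \<in> OL r"
        using b by (simp add: OL_def)
    qed
    then show ?thesis unfolding WR_def pos' by simp
  qed
  show ?thesis
  proof (cases \<theta>)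
    case (Or f g)
    have nb: "\<not> isb \<phi> p" using th Or by (simp add: isb_def)
    from mv consider "pos' = (v, p @ [0], c)" | "pos' = (v, p @ [1], c)" by (auto simp: moves_def th Or)
    then show ?thesis
    proof cases
      case 1 then show ?thesis using nonb[OF nb 1, of f] Or by simp
    next
      case 2 then show ?thesis using nonb[OF nb 2, of g] Or by simp
    qed
  next
    case (And f g)
    have nb: "\<not> isb \<phi> p" using th And by (simp add: isb_def)
    from mv consider "pos' = (v, p @ [0], c)" | "pos' = (v, p @ [1], c)" by (auto simp: moves_def th And)
    then show ?thesis
    proof cases
      case 1 then show ?thesis using nonb[OF nb 1, of f] And by simp
    next
      case 2 then show ?thesis using nonb[OF nb 2, of g] And by simp
    qed
  next
    case (Dia f)
    have nb: "\<not> isb \<phi> p" using th Dia by (simp add: isb_def)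
    from mv obtain u where pu: "pos' = (u, p @ [0], c)" by (auto simp: moves_def th Dia)
    show ?thesis using nonb[OF nb pu, of f] Dia by simp
  next
    case (Box f)
    have nb: "\<not> isb \<phi> p" using th Box by (simp add: isb_def)
    from mv obtain u where pu: "pos' = (u, p @ [0], c)" by (auto simp: moves_def th Box)
    show ?thesis using nonb[OF nb pu, of f] Box by simp
  next
    case (Mu x f)
    have b: "isb \<phi> p" using th Mu by (simp add: isb_def)
    from mv obtain a where "pos' = (v, p @ [0], c(p := Some a))" by (auto simp: moves_def th Mu)
    then show ?thesis using binmove[OF b] Mu by simp
  next
    case (Nu x f)
    have b: "isb \<phi> p" using th Nu by (simp add: isb_def)
    from mv obtain a where "pos' = (v, p @ [0], c(p := Some a))" by (auto simp: moves_def th Nu)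
    then show ?thesis using binmove[OF b] Nu by simp
  next
    case (Var x)
    from mv obtain q a where pos': "pos' = (v, q @ [0], regen q (Some a) c)"
      and nb: "nearest_binder \<phi> p x q" and o: "olt r (Some a) (c q)"
      by (auto simp: moves_def th Var)
    from nb have sq: "strict_prefix q p" and bq: "binder_of \<phi> q x" unfolding nearest_binder_def by simp_all
    have lq: "length q < length p" using sq by (rule prefix_length_less)
    from sq obtain zs where p: "p = q @ zs" unfolding strict_prefix_def prefix_def by blast
    have isq: "isb \<phi> q" using bq unfolding isb_def binder_of_def by blast
    have "(vec \<phi> (q @ [0]) (regen q (Some a) c), vec \<phi> p c) \<in> lex (OL r)"
      unfolding vec_def
    proof (rule lex_step[of "length q"])
      fix d assume d: "d < length q"
      have t1: "take d (q @ [0]) = take d q" using d by simp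
      have t2: "take d p = take d q" using d unfolding p by simp
      have ne: "take d q \<noteq> q" using d by (metis length_take min.absorb4 order_less_irrefl)
      have np: "\<not> prefix (q @ [0]) (take d q)"
      proof
        assume "prefix (q @ [0]) (take d q)"
        then have "length (q @ [0]) \<le> length (take d q)" by (rule prefix_length_le)
        then show False using d by simp
      qed
      have "regen q (Some a) c (take d q) = c (take d q)" unfolding regen_def using ne np by simp
      then show "(if d < length (q @ [0]) \<and> isb \<phi> (take d (q @ [0])) then regen q (Some a) c (take d (q @ [0])) else None) =
         (if d < length p \<and> isb \<phi> (take d p) then c (take d p) else None)"
        using d lq t1 t2 by simp
    next
      have "length p \<le> size \<phi>" using szp by simp
      then show "length q < size \<phi>" using lq by simp
    next
      have t: "take (length q) p = q" unfolding p by simp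
      have "regen q (Some a) c q = Some a" by (simp add: regen_def)
      then show "(if length q < length (q @ [0]) \<and> isb \<phi> (take (length q) (q @ [0])) then regen q (Some a) c (take (length q) (q @ [0])) else None,
             if length q < length p \<and> isb \<phi> (take (length q) p) then c (take (length q) p) else None) \<in> OL r"
        using isq lq t o by (simp add: OL_def)
    qed
    then show ?thesis unfolding WR_def pos' by simp
  qed (use mv th in \<open>simp_all add: moves_def\<close>)
qed


definition sig0 :: "('w \<Rightarrow> 'w \<Rightarrow> bool) \<Rightarrow> ('p \<Rightarrow> 'w set) \<Rightarrow> 'o rel \<Rightarrow> ('p,'x) fm \<Rightarrow> ('x \<Rightarrow> 'w set)
   \<Rightarrow> ('w, 'o) position \<Rightarrow> ('w, 'o) position" where
  "sig0 R V r \<phi> s0 pos = (SOME pos'. pos' \<in> moves R r \<phi> pos \<and> T R V r \<phi> s0 pos')"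

lemma part2:
  fixes R :: "'w \<Rightarrow> 'w \<Rightarrow> bool"
  assumes WO: "Well_order r" and card: "(card_of (Field r), card_of (UNIV::'w set)) \<notin> ordLeq"
    and sent: "sentence \<phi>"
  shows "T R V r \<phi> s0 pos \<Longrightarrow> wins R V r \<phi> (sig0 R V r \<phi> s0) pos"
proof (induction pos rule: wf_induct_rule[OF wf_WR[OF WO, of \<phi>]])
  case (1 pos)
  obtain v p c where pos: "pos = (v,p,c)" by (cases pos)
  have Tp: "T R V r \<phi> s0 (v,p,c)" using 1(2) pos by simp
  from T_sub[OF Tp] obtain \<theta> where th: "sub \<phi> p = Some \<theta>" by blast
  from LX[OF sent th, of v c] consider (P) a where "\<theta> = Prop a" | (N) a where "\<theta> = NProp a"
    | (E) "eloise_turn \<phi> (v,p,c)" | (A) "abelard_turn \<phi> (v,p,c)" by blast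
  then show ?case
  proof cases
    case P
    then show ?thesis using Tp th pos LP[of \<phi> p a R V r s0 v c] by (auto intro: wins.win_prop)
  next
    case N
    then show ?thesis using Tp th pos LNP[of \<phi> p a R V r s0 v c] by (auto intro: wins.win_nprop)
  next
    case E
    have ex: "\<exists>pos'. pos' \<in> moves R r \<phi> (v,p,c) \<and> T R V r \<phi> s0 pos'"
      using LE[OF WO card E, where ?s0.0 = s0] Tp by blast
    define p' where "p' = sig0 R V r \<phi> s0 (v,p,c)"
    have p': "p' \<in> moves R r \<phi> (v,p,c) \<and> T R V r \<phi> s0 p'"
      unfolding p'_def sig0_def by (rule someI_ex[OF ex])
    have "(p', (v,p,c)) \<in> WR r \<phi>" by (rule dec[OF th conjunct1[OF p']])
    then have "wins R V r \<phi> (sig0 R V r \<phi> s0) p'" using 1(1) p' pos by blast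
    then show ?thesis unfolding pos using E p' unfolding p'_def by (auto intro: wins.win_eloise)
  next
    case A
    have all: "\<forall>pos' \<in> moves R r \<phi> (v,p,c). T R V r \<phi> s0 pos'"
      using LA[OF WO card A, where ?s0.0 = s0] Tp by blast
    have "\<forall>pos' \<in> moves R r \<phi> (v,p,c). wins R V r \<phi> (sig0 R V r \<phi> s0) pos'"
    proof
      fix pos' assume m: "pos' \<in> moves R r \<phi> (v,p,c)"
      have "(pos', (v,p,c)) \<in> WR r \<phi>" using dec[OF th m] .
      then show "wins R V r \<phi> (sig0 R V r \<phi> s0) pos'" using 1(1) all m pos by blast
    qed
    then show ?thesis unfolding pos using A by (auto intro: wins.win_abelard)
  qed
qed

lemma card_facts:
  "Well_order (cardSuc (card_of (UNIV :: 'w set)))"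
  "(card_of (Field (cardSuc (card_of (UNIV :: 'w set)))), card_of (UNIV::'w set)) \<notin> ordLeq"
proof -
  have co: "Card_order (card_of (UNIV :: 'w set))" by (rule card_of_Card_order)
  have cs: "Card_order (cardSuc (card_of (UNIV :: 'w set)))" by (rule cardSuc_Card_order[OF co])
  then show "Well_order (cardSuc (card_of (UNIV :: 'w set)))" by (rule card_order_on_well_order_on)
  have iso: "(card_of (Field (cardSuc (card_of (UNIV :: 'w set)))), cardSuc (card_of (UNIV :: 'w set))) \<in> ordIso"
    by (rule card_of_Field_ordIso[OF cs])
  have lt: "(card_of (UNIV :: 'w set), cardSuc (card_of (UNIV :: 'w set))) \<in> ordLess"
    by (rule cardSuc_greater[OF co])
  show "(card_of (Field (cardSuc (card_of (UNIV :: 'w set)))), card_of (UNIV::'w set)) \<notin> ordLeq"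
  proof
    assume le: "(card_of (Field (cardSuc (card_of (UNIV :: 'w set)))), card_of (UNIV::'w set)) \<in> ordLeq"
    have "(cardSuc (card_of (UNIV :: 'w set)), card_of (UNIV::'w set)) \<in> ordLeq"
      using ordIso_ordLeq_trans[OF ordIso_symmetric[OF iso] le] .
    then show False using lt not_ordLess_ordLeq by blast
  qed
qed

theorem mainTheorem5:
  fixes R :: "'w \<Rightarrow> 'w \<Rightarrow> bool" and V :: "'p \<Rightarrow> 'w set"
    and s :: "'x \<Rightarrow> 'w set" and w :: 'w and \<phi> :: "('p, 'x) fm"
  assumes "sentence \<phi>"
  shows "w \<in> sat R V s \<phi> \<longleftrightarrow> game_forces R V (cardSuc (card_of (UNIV :: 'w set))) w \<phi>"
proof -
  note WO = card_facts(1)[where 'w = 'w] and card = card_facts(2)[where 'w = 'w]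
  let ?r = "cardSuc (card_of (UNIV :: 'w set))"
  have T0: "T R V ?r \<phi> s (init_pos w) \<longleftrightarrow> w \<in> sat R V s \<phi>"
    by (simp add: T_def init_pos_def)
  show ?thesis
  proof
    assume "w \<in> sat R V s \<phi>"
    then have "T R V ?r \<phi> s (init_pos w)" using T0 by simp
    then have "wins R V ?r \<phi> (sig0 R V ?r \<phi> s) (init_pos w)" by (rule part2[OF WO card assms])
    then show "game_forces R V ?r w \<phi>" unfolding game_forces_def by blast
  next
    assume "game_forces R V ?r w \<phi>"
    then obtain \<sigma> where "wins R V ?r \<phi> \<sigma> (init_pos w)" unfolding game_forces_def by blast
    then have "T R V ?r \<phi> s (init_pos w)" by (rule part1[OF WO card])
    then show "w \<in> sat R V s \<phi>" using T0 by simp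
  qed
qed

end
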